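(* Let $p$ be a stochastic choice function on $X$. The following are equivalent: (i) $p$ is rationalized by an MSC $\langle Q,\nu\rangle$ such that for every $M\in\mathcal N$ the matrix $Q(M)$ is fully comparable and reversible on $M$; (ii) $p$ is positive and satisfies independence of irrelevant alternatives, i.e. $p(i,\{i,j\})\,p(j,M)=p(j,\{i,j\})\,p(i,M)$ for all $M\in\mathcal N$ and $i,j\in M$; (iii) $p$ is rationalized by an MSC $\langle Q,\nu\rangle$ for which there is a function $u:X\to(0,\infty)$ such that for all $M\in\mathcal N$ and distinct $i,j\in M$, $q_{ij}(M)>0$ and $\dfrac{q_{ij}(M)}{q_{ji}(M)}=\dfrac{u(j)}{u(i)}$.
   Context: $X$ is a finite set of alternatives; a menu is a nonempty subset of $X$, and $\mathcal N$ denotes the set of all menus. A stochastic choice function is a map $p:X\times\mathcal N\to[0,1]$ with $\sum_{i\in M}p(i,M)=1$ and $p(i,M)=0$ for $i\notin M$; $p(\cdot,M)$ denotes the row vector $(p(i,M))_{i\in M}$. $p$ is positive if $p(i,M)>0$ for all $M\in\mathcal N$ and $i\in M$. An MSC (Markov stochastic choice model) $\langle Q,\nu\rangle$ consists of, for every menu $M$, a matrix $Q(M)=(q_{ij}(M))_{i,j\in M}$ with nonnegative entries and a probability distribution $\nu_M$ on $M$, such that for all $M\in\mathcal N$ and distinct $i,j\in M$: (A1) $q_{ii}(M)=1-\sum_{k\neq i}q_{ik}(M)>0$; (A2) if $q_{ij}(\{i,j\})=0$ then $q_{ji}(\{i,j\})>0$; (A3) $q_{ij}(\{i,j\})\,q_{ji}(M)=q_{ji}(\{i,j\})\,q_{ij}(M)$.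 For a right stochastic matrix $Q$ on $M$ and a distribution $\nu$ on $M$ define $\rho(\nu,Q)=\lim_{\alpha\to0^+}\sum_{t\ge0}\alpha(1-\alpha)^t\nu Q^t$ (the limit exists and satisfies $\rho(\nu,Q)(I-Q)=0$). $p$ is rationalized by the MSC $\langle Q,\nu\rangle$ if $p(\cdot,M)=\rho(\nu_M,Q(M))$ for every $M\in\mathcal N$. $Q(M)$ is fully comparable if $q_{ij}(M)>0$ for all distinct $i,j\in M$. $Q(M)$ is reversible on $M$ if, with $\rho=\rho(\nu_M,Q(M))$, $q_{ji}(M)\rho_j=\rho_i\,q_{ij}(M)$ for all $i,j\in M$. *)

theory Defs
  imports "HOL-Analysis.Analysis"
begin

(* The finite set X of alternatives is the universe of a finite type 'a.
   A menu is a nonempty subset of X. *)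
definition menu :: "'a::finite set \<Rightarrow> bool" where
  "menu M \<longleftrightarrow> M \<noteq> {}"

definition stoch_choice :: "('a::finite \<Rightarrow> 'a set \<Rightarrow> real) \<Rightarrow> bool" where
  "stoch_choice p \<longleftrightarrow>
     (\<forall>M. menu M \<longrightarrow>
        (\<forall>i. 0 \<le> p i M \<and> p i M \<le> 1) \<and>
        (\<Sum>i\<in>M. p i M) = 1 \<and>
        (\<forall>i. i \<notin> M \<longrightarrow> p i M = 0))"

definition positive_sc :: "('a::finite \<Rightarrow> 'a set \<Rightarrow> real) \<Rightarrow> bool" where
  "positive_sc p \<longleftrightarrow> (\<forall>M. menu M \<longrightarrow> (\<forall>i\<in>M. p i M > 0))"

definition iia :: "('a::finite \<Rightarrow> 'a set \<Rightarrow> real) \<Rightarrow> bool" where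
  "iia p \<longleftrightarrow> (\<forall>M. menu M \<longrightarrow> (\<forall>i\<in>M. \<forall>j\<in>M.
      p i {i, j} * p j M = p j {i, j} * p i M))"

fun matpow :: "'a set \<Rightarrow> ('a \<Rightarrow> 'a \<Rightarrow> real) \<Rightarrow> nat \<Rightarrow> 'a \<Rightarrow> 'a \<Rightarrow> real" where
  "matpow M Q 0 i j = (if i = j then 1 else 0)"
| "matpow M Q (Suc t) i j = (\<Sum>k\<in>M. matpow M Q t i k * Q k j)"

definition vecmatpow :: "'a set \<Rightarrow> ('a \<Rightarrow> real) \<Rightarrow> ('a \<Rightarrow> 'a \<Rightarrow> real) \<Rightarrow> nat \<Rightarrow> 'a \<Rightarrow> real" where
  "vecmatpow M nu Q t j = (\<Sum>i\<in>M. nu i * matpow M Q t i j)"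

definition rho :: "'a set \<Rightarrow> ('a \<Rightarrow> real) \<Rightarrow> ('a \<Rightarrow> 'a \<Rightarrow> real) \<Rightarrow> 'a \<Rightarrow> real" where
  "rho M nu Q j = Lim (at_right 0)
      (\<lambda>\<alpha>::real. \<Sum>t. \<alpha> * (1 - \<alpha>) ^ t * vecmatpow M nu Q t j)"

(* Markov stochastic choice model <Q, nu>: Q M i j = q_ij(M), nu M i = nu_M(i) *)
definition MSC :: "('a::finite set \<Rightarrow> 'a \<Rightarrow> 'a \<Rightarrow> real) \<Rightarrow> ('a set \<Rightarrow> 'a \<Rightarrow> real) \<Rightarrow> bool" where
  "MSC Q nu \<longleftrightarrow>
     (\<forall>M. menu M \<longrightarrow>
        (\<forall>i\<in>M. \<forall>j\<in>M. Q M i j \<ge> 0) \<and>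
        (\<forall>i\<in>M. nu M i \<ge> 0) \<and> (\<Sum>i\<in>M. nu M i) = 1 \<and>
        (\<forall>i\<in>M. Q M i i = 1 - (\<Sum>k\<in>M - {i}. Q M i k) \<and> Q M i i > 0) \<and>
        (\<forall>i\<in>M. \<forall>j\<in>M. i \<noteq> j \<longrightarrow>
            (Q {i, j} i j = 0 \<longrightarrow> Q {i, j} j i > 0) \<and>
            Q {i, j} i j * Q M j i = Q {i, j} j i * Q M i j))"

definition rationalizes :: "('a::finite set \<Rightarrow> 'a \<Rightarrow> 'a \<Rightarrow> real) \<Rightarrow> ('a set \<Rightarrow> 'a \<Rightarrow> real)
    \<Rightarrow> ('a \<Rightarrow> 'a set \<Rightarrow> real) \<Rightarrow> bool" where
  "rationalizes Q nu p \<longleftrightarrow> MSC Q nu \<and>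
     (\<forall>M. menu M \<longrightarrow> (\<forall>i\<in>M. p i M = rho M (nu M) (Q M) i))"

definition fully_comparable :: "'a set \<Rightarrow> ('a \<Rightarrow> 'a \<Rightarrow> real) \<Rightarrow> bool" where
  "fully_comparable M Q \<longleftrightarrow> (\<forall>i\<in>M. \<forall>j\<in>M. i \<noteq> j \<longrightarrow> Q i j > 0)"

definition reversible :: "'a set \<Rightarrow> ('a \<Rightarrow> real) \<Rightarrow> ('a \<Rightarrow> 'a \<Rightarrow> real) \<Rightarrow> bool" where
  "reversible M nu Q \<longleftrightarrow>
     (\<forall>i\<in>M. \<forall>j\<in>M. Q j i * rho M nu Q j = rho M nu Q i * Q i j)"

end

theory Submission
  imports Defs
begin

lemma vmp_Suc: "vecmatpow M nu Q (Suc t) j = (\<Sum>k\<in>M. vecmatpow M nu Q t k * Q k j)"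
proof -
  have "vecmatpow M nu Q (Suc t) j = (\<Sum>i\<in>M. nu i * (\<Sum>k\<in>M. matpow M Q t i k * Q k j))"
    by (simp only: vecmatpow_def matpow.simps(2))
  also have "\<dots> = (\<Sum>i\<in>M. \<Sum>k\<in>M. nu i * matpow M Q t i k * Q k j)"
    by (simp only: sum_distrib_left mult.assoc)
  also have "\<dots> = (\<Sum>k\<in>M. \<Sum>i\<in>M. nu i * matpow M Q t i k * Q k j)"
    by (rule sum.swap)
  also have "\<dots> = (\<Sum>k\<in>M. (\<Sum>i\<in>M. nu i * matpow M Q t i k) * Q k j)"
    by (simp only: sum_distrib_right)
  also have "\<dots> = (\<Sum>k\<in>M. vecmatpow M nu Q t k * Q k j)"
    by (simp only: vecmatpow_def)
  finally show ?thesis .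
qed

lemma vmp_0: "finite M \<Longrightarrow> j \<in> M \<Longrightarrow> vecmatpow M nu Q 0 j = nu j"
  unfolding vecmatpow_def by (simp add: if_distrib cong: if_cong)

lemma abel_const:
  fixes \<alpha> c :: real
  assumes "0 < \<alpha>" "\<alpha> < 1"
  shows "(\<Sum>t. \<alpha> * (1 - \<alpha>) ^ t * c) = c"
proof -
  have "(\<lambda>t. (1 - \<alpha>) ^ t) sums (1 / (1 - (1 - \<alpha>)))"
    by (rule geometric_sums) (use assms in auto)
  then have "(\<lambda>t. (\<alpha> * c) * (1 - \<alpha>) ^ t) sums ((\<alpha> * c) * (1 / (1 - (1 - \<alpha>))))"
    by (rule sums_mult)
  then have "(\<lambda>t. \<alpha> * (1 - \<alpha>) ^ t * c) sums c"
    using assms by (simp add: mult_ac)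
  then show ?thesis by (rule sums_unique[symmetric])
qed

lemma ev01: "eventually (\<lambda>\<alpha>::real. 0 < \<alpha> \<and> \<alpha> < 1) (at_right 0)"
  by (subst eventually_at_right[of 0 1]) (auto intro!: exI[of _ 1])

lemma rho_stat:
  assumes fin: "finite M" and st: "\<And>j. j \<in> M \<Longrightarrow> (\<Sum>i\<in>M. nu i * Q i j) = nu j"
    and jM: "j \<in> M"
  shows "rho M nu Q j = nu j"
proof -
  have v: "vecmatpow M nu Q t k = nu k" if "k \<in> M" for t k
    using that
  proof (induction t arbitrary: k)
    case 0 then show ?case by (rule vmp_0[OF fin])
  next
    case (Suc t)
    have "vecmatpow M nu Q (Suc t) k = (\<Sum>i\<in>M. vecmatpow M nu Q t i * Q i k)"
      by (rule vmp_Suc)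
    also have "\<dots> = (\<Sum>i\<in>M. nu i * Q i k)"
    proof (rule sum.cong)
      fix i assume "i \<in> M"
      then show "vecmatpow M nu Q t i * Q i k = nu i * Q i k" using Suc.IH by simp
    qed (rule refl)
    also have "\<dots> = nu k" by (rule st[OF Suc.prems])
    finally show ?case .
  qed
  have "eventually (\<lambda>\<alpha>. (\<Sum>t. \<alpha> * (1 - \<alpha>) ^ t * vecmatpow M nu Q t j) = nu j) (at_right (0::real))"
    using ev01 by eventually_elim (simp add: v[OF jM] abel_const)
  then have "((\<lambda>\<alpha>. (\<Sum>t. \<alpha> * (1 - \<alpha>) ^ t * vecmatpow M nu Q t j)) \<longlongrightarrow> nu j) (at_right (0::real))"
    by (rule tendsto_eventually)
  then show ?thesis unfolding rho_def
    by (rule tendsto_Lim[rotated]) (simp add: trivial_limit_at_right_real)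
qed

lemma ergodic:
  fixes M :: "'a set" and Q :: "'a \<Rightarrow> 'a \<Rightarrow> real" and nu w :: "'a \<Rightarrow> real"
  assumes fin: "finite M" and ne: "M \<noteq> {}"
    and Qpos: "\<And>i j. i \<in> M \<Longrightarrow> j \<in> M \<Longrightarrow> Q i j > 0"
    and Qrow: "\<And>i. i \<in> M \<Longrightarrow> (\<Sum>j\<in>M. Q i j) = 1"
    and wpos: "\<And>i. i \<in> M \<Longrightarrow> w i > 0" and wsum: "(\<Sum>i\<in>M. w i) = 1"
    and db: "\<And>i j. i \<in> M \<Longrightarrow> j \<in> M \<Longrightarrow> w i * Q i j = w j * Q j i"
    and nusum: "(\<Sum>i\<in>M. nu i) = 1"
    and jM: "j \<in> M"
  shows "rho M nu Q j = w j"
proof -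
  define v where "v t k = vecmatpow M nu Q t k" for t k
  define x where "x t k = v t k / w k" for t k
  have vS: "v (Suc t) k = (\<Sum>i\<in>M. v t i * Q i k)" for t k
    unfolding v_def by (rule vmp_Suc)
  have vx: "v t k = w k * x t k" if "k \<in> M" for t k
    using wpos[OF that] unfolding x_def by simp
  have xS: "x (Suc t) k = (\<Sum>i\<in>M. Q k i * x t i)" if k: "k \<in> M" for t k
  proof -
    have "v (Suc t) k = (\<Sum>i\<in>M. x t i * (w i * Q i k))"
      unfolding vS by (intro sum.cong) (auto simp: vx)
    also have "\<dots> = (\<Sum>i\<in>M. x t i * (w k * Q k i))"
      using db k by (intro sum.cong) auto
    also have "\<dots> = w k * (\<Sum>i\<in>M. Q k i * x t i)"
      by (simp add: sum_distrib_left mult_ac)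
    finally show ?thesis using wpos[OF k] unfolding x_def by simp
  qed
  have vsum: "(\<Sum>k\<in>M. v t k) = 1" for t
  proof (induction t)
    case 0
    then show ?case unfolding v_def using nusum vmp_0[OF fin] by simp
  next
    case (Suc t)
    have "(\<Sum>k\<in>M. v (Suc t) k) = (\<Sum>k\<in>M. \<Sum>i\<in>M. v t i * Q i k)"
      by (simp add: vS)
    also have "\<dots> = (\<Sum>i\<in>M. \<Sum>k\<in>M. v t i * Q i k)" by (rule sum.swap)
    also have "\<dots> = (\<Sum>i\<in>M. v t i * (\<Sum>k\<in>M. Q i k))" by (simp add: sum_distrib_left)
    also have "\<dots> = (\<Sum>i\<in>M. v t i)" by (simp add: Qrow)
    finally show ?case using Suc.IH by simp
  qed
  have xsum: "(\<Sum>k\<in>M. w k * x t k) = 1" for t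
    using vsum[of t] by (simp add: vx)
  define hi where "hi t = Max (x t ` M)" for t
  define lo where "lo t = Min (x t ` M)" for t
  have lo_le: "lo t \<le> x t k" and le_hi: "x t k \<le> hi t" if "k \<in> M" for t k
    using that fin unfolding lo_def hi_def by auto
  have lo1: "lo t \<le> 1" for t
  proof -
    have "(\<Sum>k\<in>M. w k * lo t) \<le> (\<Sum>k\<in>M. w k * x t k)"
      by (intro sum_mono mult_left_mono) (auto simp: lo_le less_imp_le wpos)
    then show ?thesis using xsum wsum by (simp add: sum_distrib_right[symmetric])
  qed
  have hi1: "1 \<le> hi t" for t
  proof -
    have "(\<Sum>k\<in>M. w k * x t k) \<le> (\<Sum>k\<in>M. w k * hi t)"
      by (intro sum_mono mult_left_mono) (auto simp: le_hi less_imp_le wpos)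
    then show ?thesis using xsum wsum by (simp add: sum_distrib_right[symmetric])
  qed
  define \<delta> where "\<delta> = Min ((\<lambda>(i,j). Q i j) ` (M \<times> M))"
  have \<delta>le: "\<delta> \<le> Q i j" if "i \<in> M" "j \<in> M" for i j
    unfolding \<delta>_def using that fin by (intro Min_le) auto
  have \<delta>pos: "\<delta> > 0"
  proof -
    have "\<delta> \<in> (\<lambda>(i,j). Q i j) ` (M \<times> M)"
      unfolding \<delta>_def using fin ne by (intro Min_in) auto
    then show ?thesis using Qpos by auto
  qed
  have Qle1: "Q i j \<le> 1" if "i \<in> M" "j \<in> M" for i j
  proof -
    have "Q i j \<le> (\<Sum>k\<in>M. Q i k)"
      using that fin Qpos by (intro member_le_sum) (auto simp: less_imp_le)
    then show ?thesis using Qrow that by simp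
  qed
  obtain i0 where i0: "i0 \<in> M" using ne by auto
  have \<delta>1: "\<delta> \<le> 1" using \<delta>le[OF i0 i0] Qle1[OF i0 i0] by simp
  have contract: "hi (Suc t) - lo (Suc t) \<le> (1 - \<delta>) * (hi t - lo t)" for t
  proof -
    have hl: "lo t \<le> hi t" using lo1[of t] hi1[of t] by linarith
    have "lo t \<in> x t ` M" unfolding lo_def using fin ne by (intro Min_in) auto
    then obtain imin where imin: "imin \<in> M" "x t imin = lo t" by auto
    have "hi t \<in> x t ` M" unfolding hi_def using fin ne by (intro Max_in) auto
    then obtain imax where imax: "imax \<in> M" "x t imax = hi t" by auto
    have up: "x (Suc t) k \<le> hi t - \<delta> * (hi t - lo t)" if k: "k \<in> M" for k
    proof -
      have "x (Suc t) k = Q k imin * x t imin + (\<Sum>i\<in>M-{imin}. Q k i * x t i)"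
        unfolding xS[OF k] using fin imin by (simp add: sum.remove)
      also have "\<dots> \<le> Q k imin * lo t + (\<Sum>i\<in>M-{imin}. Q k i * hi t)"
        using imin by (intro add_mono sum_mono mult_left_mono) (auto simp: le_hi less_imp_le Qpos k)
      also have "(\<Sum>i\<in>M-{imin}. Q k i * hi t) = (1 - Q k imin) * hi t"
        using Qrow[OF k] fin imin by (simp add: sum_distrib_right[symmetric] sum.remove)
      also have "Q k imin * lo t + (1 - Q k imin) * hi t = hi t - Q k imin * (hi t - lo t)"
        by (simp add: algebra_simps)
      also have "\<dots> \<le> hi t - \<delta> * (hi t - lo t)"
        using \<delta>le[OF k imin(1)] hl by (simp add: mult_right_mono)
      finally show ?thesis .
    qed
    have dn: "lo t + \<delta> * (hi t - lo t) \<le> x (Suc t) k" if k: "k \<in> M" for k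
    proof -
      have "lo t + \<delta> * (hi t - lo t) \<le> lo t + Q k imax * (hi t - lo t)"
        using \<delta>le[OF k imax(1)] hl by (simp add: mult_right_mono)
      also have "\<dots> = Q k imax * hi t + (1 - Q k imax) * lo t"
        by (simp add: algebra_simps)
      also have "(1 - Q k imax) * lo t = (\<Sum>i\<in>M-{imax}. Q k i * lo t)"
        using Qrow[OF k] fin imax by (simp add: sum_distrib_right[symmetric] sum.remove)
      also have "Q k imax * hi t + (\<Sum>i\<in>M-{imax}. Q k i * lo t) \<le> Q k imax * x t imax + (\<Sum>i\<in>M-{imax}. Q k i * x t i)"
        using imax by (intro add_mono sum_mono mult_left_mono) (auto simp: lo_le less_imp_le Qpos k)
      also have "\<dots> = x (Suc t) k"
        unfolding xS[OF k] using fin imax by (simp add: sum.remove)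
      finally show ?thesis .
    qed
    have "hi (Suc t) \<le> hi t - \<delta> * (hi t - lo t)"
      using fin ne up unfolding hi_def[of "Suc t"] by (subst Max_le_iff) auto
    moreover have "lo t + \<delta> * (hi t - lo t) \<le> lo (Suc t)"
      using fin ne dn unfolding lo_def[of "Suc t"] by (subst Min_ge_iff) auto
    ultimately have "hi (Suc t) - lo (Suc t) \<le> (1 - 2 * \<delta>) * (hi t - lo t)"
      by (simp add: algebra_simps)
    also have "\<dots> \<le> (1 - \<delta>) * (hi t - lo t)"
      using hl \<delta>pos by (intro mult_right_mono) auto
    finally show ?thesis .
  qed
  define r where "r = 1 - \<delta>"
  have r0: "0 \<le> r" and r1: "r < 1" using \<delta>pos \<delta>1 unfolding r_def by auto
  have osc: "hi t - lo t \<le> (hi 0 - lo 0) * r ^ t" for t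
  proof (induction t)
    case 0 then show ?case by simp
  next
    case (Suc t)
    have "hi (Suc t) - lo (Suc t) \<le> r * (hi t - lo t)" using contract unfolding r_def .
    also have "\<dots> \<le> r * ((hi 0 - lo 0) * r ^ t)" using Suc.IH r0 by (rule mult_left_mono)
    finally show ?case by (simp add: mult_ac)
  qed
  define C where "C = w j * (hi 0 - lo 0)"
  have C0: "0 \<le> C" unfolding C_def
  proof (rule mult_nonneg_nonneg)
    show "0 \<le> w j" using wpos[OF jM] by simp
    show "0 \<le> hi 0 - lo 0" using lo1[of 0] hi1[of 0] by linarith
  qed
  have bound: "\<bar>v t j - w j\<bar> \<le> C * r ^ t" for t
  proof -
    have "\<bar>x t j - 1\<bar> \<le> hi t - lo t"
      using lo_le[OF jM, of t] le_hi[OF jM, of t] lo1[of t] hi1[of t] by linarith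
    then have "\<bar>x t j - 1\<bar> \<le> (hi 0 - lo 0) * r ^ t" using osc[of t] by linarith
    then have "w j * \<bar>x t j - 1\<bar> \<le> w j * ((hi 0 - lo 0) * r ^ t)"
      using wpos[OF jM] by (intro mult_left_mono) auto
    moreover have "\<bar>v t j - w j\<bar> = w j * \<bar>x t j - 1\<bar>"
    proof -
      have "v t j - w j = w j * (x t j - 1)" by (simp add: vx[OF jM] algebra_simps)
      then show ?thesis using wpos[OF jM] by (simp add: abs_mult)
    qed
    ultimately show ?thesis unfolding C_def by (simp add: mult_ac)
  qed
  define f where "f \<alpha> = (\<Sum>t. \<alpha> * (1 - \<alpha>) ^ t * v t j)" for \<alpha> :: real
  have main: "\<bar>f \<alpha> - w j\<bar> \<le> \<alpha> * (C / \<delta>)" if a: "0 < \<alpha>" "\<alpha> < 1" for \<alpha>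
  proof -
    define d where "d t = \<alpha> * (1 - \<alpha>) ^ t * (v t j - w j)" for t
    define b where "b t = (\<alpha> * C) * ((1 - \<alpha>) * r) ^ t" for t
    have q0: "0 \<le> (1 - \<alpha>) * r" using a r0 by simp
    have q1: "(1 - \<alpha>) * r \<le> r"
      by (rule mult_left_le_one_le) (use a r0 in auto)
    have qr: "\<bar>(1 - \<alpha>) * r\<bar> < 1" using q0 q1 r1 by linarith
    have "(\<lambda>t. ((1 - \<alpha>) * r) ^ t) sums (1 / (1 - (1 - \<alpha>) * r))"
      using qr by (intro geometric_sums) simp
    then have bsums: "b sums ((\<alpha> * C) * (1 / (1 - (1 - \<alpha>) * r)))"
      unfolding b_def by (rule sums_mult)
    have dabs: "\<bar>d t\<bar> \<le> b t" for t
    proof -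
      have "\<bar>d t\<bar> = \<alpha> * (1 - \<alpha>) ^ t * \<bar>v t j - w j\<bar>"
        unfolding d_def using a by (simp add: abs_mult)
      also have "\<dots> \<le> \<alpha> * (1 - \<alpha>) ^ t * (C * r ^ t)"
        using a bound by (intro mult_left_mono) auto
      also have "\<dots> = b t" by (simp only: b_def power_mult_distrib mult_ac)
      finally show ?thesis .
    qed
    have dsum: "summable d"
    proof (rule summable_comparison_test'[of b 0])
      show "summable b" using bsums by (simp add: sums_iff)
      fix n :: nat show "norm (d n) \<le> b n" using dabs[of n] by simp
    qed
    have csums: "(\<lambda>t. \<alpha> * (1 - \<alpha>) ^ t * w j) sums w j"
      using abel_const[OF a, of "w j"] 
    proof -
      have "(\<lambda>t. (1 - \<alpha>) ^ t) sums (1 / (1 - (1 - \<alpha>)))"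
        by (rule geometric_sums) (use a in auto)
      then have "(\<lambda>t. (\<alpha> * w j) * (1 - \<alpha>) ^ t) sums ((\<alpha> * w j) * (1 / (1 - (1 - \<alpha>))))"
        by (rule sums_mult)
      then show ?thesis using a by (simp add: mult_ac)
    qed
    have "(\<lambda>t. d t + \<alpha> * (1 - \<alpha>) ^ t * w j) sums (suminf d + w j)"
      using dsum csums by (rule sums_add[OF summable_sums]) 
    moreover have "(\<lambda>t. d t + \<alpha> * (1 - \<alpha>) ^ t * w j) = (\<lambda>t. \<alpha> * (1 - \<alpha>) ^ t * v t j)"
      unfolding d_def by (auto simp: algebra_simps)
    ultimately have fe: "f \<alpha> = suminf d + w j" unfolding f_def by (simp add: sums_iff)
    have bsum: "summable b" using bsums by (simp add: sums_iff)
    have "suminf d \<le> suminf b"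
      using dsum bsum dabs by (intro suminf_le) (auto simp: abs_le_iff)
    moreover have "- suminf b \<le> suminf d"
    proof -
      have "suminf (\<lambda>t. - b t) \<le> suminf d"
      proof (rule suminf_le)
        show "\<And>n. - b n \<le> d n" using dabs by (simp add: abs_le_iff) (smt (verit))
        show "summable (\<lambda>t. - b t)" using bsum by (rule summable_minus)
      qed (rule dsum)
      then show ?thesis by (simp add: suminf_minus bsum)
    qed
    ultimately have "\<bar>f \<alpha> - w j\<bar> \<le> suminf b" using fe by simp
    also have "suminf b = (\<alpha> * C) / (1 - (1 - \<alpha>) * r)" using bsums by (simp add: sums_iff)
    also have "\<dots> \<le> (\<alpha> * C) / \<delta>"
    proof (rule divide_left_mono)
      show "0 \<le> \<alpha> * C" using a C0 by simp
      show "\<delta> \<le> 1 - (1 - \<alpha>) * r" using a r0 unfolding r_def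
        by (simp add: algebra_simps mult_nonneg_nonneg)
      show "0 < (1 - (1 - \<alpha>) * r) * \<delta>" using \<delta>pos qr
        by (intro mult_pos_pos) auto
    qed
    finally show ?thesis by simp
  qed
  have "((\<lambda>\<alpha>. f \<alpha> - w j) \<longlongrightarrow> 0) (at_right 0)"
  proof (rule Lim_null_comparison)
    show "eventually (\<lambda>\<alpha>. norm (f \<alpha> - w j) \<le> \<alpha> * (C / \<delta>)) (at_right 0)"
      using ev01 by eventually_elim (use main in auto)
    have "((\<lambda>\<alpha>::real. \<alpha> * (C / \<delta>)) \<longlongrightarrow> 0 * (C / \<delta>)) (at_right 0)"
      by (intro tendsto_intros)
    then show "((\<lambda>\<alpha>::real. \<alpha> * (C / \<delta>)) \<longlongrightarrow> 0) (at_right 0)" by simp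
  qed
  then have "(f \<longlongrightarrow> w j) (at_right 0)" by (rule LIM_zero_cancel)
  then have "((\<lambda>\<alpha>. \<Sum>t. \<alpha> * (1 - \<alpha>) ^ t * vecmatpow M nu Q t j) \<longlongrightarrow> w j) (at_right 0)"
    unfolding f_def v_def .
  then show ?thesis unfolding rho_def
    by (rule tendsto_Lim[rotated]) (simp add: trivial_limit_at_right_real)
qed

lemma menu_finite: "finite (M :: 'a::finite set)" by simp

lemma sc_facts:
  assumes "stoch_choice p" "menu M"
  shows "0 \<le> p i M" "(\<Sum>i\<in>M. p i M) = 1"
  using assms unfolding stoch_choice_def by auto

lemma iia_rel:
  fixes p :: "'a::finite \<Rightarrow> 'a set \<Rightarrow> real"
  assumes pos: "positive_sc p" and ia: "iia p" and M: "menu M" and i: "i \<in> M" and j: "j \<in> M"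
  shows "p i M * p j UNIV = p j M * p i UNIV"
proof (cases "i = j")
  case True then show ?thesis by simp
next
  case False
  have mij: "menu {i, j}" by (simp add: menu_def)
  have mU: "menu (UNIV :: 'a set)" by (simp add: menu_def)
  have e1: "p i {i, j} * p j M = p j {i, j} * p i M" using ia M i j unfolding iia_def by blast
  have e2: "p i {i, j} * p j UNIV = p j {i, j} * p i UNIV" using ia mU unfolding iia_def by blast
  have b: "p j {i, j} > 0" using pos mij unfolding positive_sc_def by blast
  have "p j {i, j} * (p i M * p j UNIV) = p i {i, j} * p j M * p j UNIV"
    using e1 by (simp add: mult_ac)
  also have "\<dots> = p j M * (p i {i, j} * p j UNIV)" by (simp add: mult_ac)
  also have "\<dots> = p j {i, j} * (p j M * p i UNIV)" using e2 by (simp add: mult_ac)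
  finally show ?thesis using b by simp
qed

lemma construct:
  fixes p :: "'a::finite \<Rightarrow> 'a set \<Rightarrow> real"
  assumes sc: "stoch_choice p" and pos: "positive_sc p" and ia: "iia p"
  shows "\<exists>Q nu. rationalizes Q nu p \<and>
     (\<forall>M. menu M \<longrightarrow> fully_comparable M (Q M) \<and> reversible M (nu M) (Q M)) \<and>
     (\<exists>u :: 'a \<Rightarrow> real. (\<forall>x. u x > 0) \<and>
               (\<forall>M. menu M \<longrightarrow> (\<forall>i\<in>M. \<forall>j\<in>M. i \<noteq> j \<longrightarrow>
                   Q M i j > 0 \<and> Q M i j / Q M j i = u j / u i)))"
proof -
  define u where "u k = p k UNIV" for k
  have mU: "menu (UNIV :: 'a set)" by (simp add: menu_def)
  have upos: "u k > 0" for k using pos mU unfolding positive_sc_def u_def by blast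
  have usum: "(\<Sum>k\<in>UNIV. u k) = 1" using sc_facts[OF sc mU] unfolding u_def by blast
  define Q where "Q M i j = (if i = j then 1 - (\<Sum>k\<in>M-{i}. u k / 2) else u j / 2)"
    for M :: "'a set" and i j
  define nu where "nu M i = p i M" for M :: "'a set" and i
  have Qii: "Q M i i > 0" for M i
  proof -
    have "(\<Sum>k\<in>M-{i}. u k / 2) \<le> (\<Sum>k\<in>UNIV. u k / 2)"
      using upos by (intro sum_mono2) (auto simp: less_imp_le)
    also have "\<dots> = 1 / 2" using usum by (simp add: sum_divide_distrib[symmetric])
    finally show ?thesis unfolding Q_def by simp
  qed
  have Qoff: "Q M i k = u k / 2" if "k \<noteq> i" for M i k using that unfolding Q_def by simp
  have Qdiag: "Q M i i = 1 - (\<Sum>k\<in>M-{i}. Q M i k)" for M i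
  proof -
    have "(\<Sum>k\<in>M-{i}. Q M i k) = (\<Sum>k\<in>M-{i}. u k / 2)"
      by (intro sum.cong) (auto simp: Q_def)
    then show ?thesis by (simp add: Q_def)
  qed
  have row: "(\<Sum>k\<in>M. Q M i k) = 1" if "i \<in> M" for M i
    using that Qdiag[of M i] by (simp add: sum.remove)
  have db: "p i M * Q M i j = p j M * Q M j i" if "menu M" "i \<in> M" "j \<in> M" for M i j
  proof (cases "i = j")
    case True then show ?thesis by simp
  next
    case False
    then show ?thesis using iia_rel[OF pos ia that] unfolding Q_def u_def
      by (simp add: mult_ac)
  qed
  have rhoeq: "rho M (nu M) (Q M) j = p j M" if M: "menu M" and j: "j \<in> M" for M j
  proof -
    have "rho M (nu M) (Q M) j = nu M j"
    proof (rule rho_stat[OF menu_finite _ j])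
      fix k assume k: "k \<in> M"
      have "(\<Sum>i\<in>M. nu M i * Q M i k) = (\<Sum>i\<in>M. p k M * Q M k i)"
        unfolding nu_def using db[OF M _ k] by (intro sum.cong) auto
      also have "\<dots> = p k M" by (simp add: sum_distrib_left[symmetric] row[OF k])
      finally show "(\<Sum>i\<in>M. nu M i * Q M i k) = nu M k" unfolding nu_def .
    qed
    then show ?thesis unfolding nu_def by simp
  qed
  have Qpos: "Q M i j > 0" for M i j
    using Qii upos by (cases "i = j") (auto simp: Qoff)
  have msc: "MSC Q nu"
    unfolding MSC_def
  proof (intro allI impI)
    fix M :: "'a set" assume M: "menu M"
    have n1: "\<forall>i\<in>M. \<forall>j\<in>M. 0 \<le> Q M i j" using Qpos less_imp_le by blast
    have n2: "\<forall>i\<in>M. 0 \<le> nu M i" unfolding nu_def using sc_facts[OF sc M] by blast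
    have n3: "(\<Sum>i\<in>M. nu M i) = 1" unfolding nu_def using sc_facts[OF sc M] by blast
    have n4: "\<forall>i\<in>M. Q M i i = 1 - (\<Sum>k\<in>M - {i}. Q M i k) \<and> 0 < Q M i i"
      using Qdiag Qii by blast
    have n5: "\<forall>i\<in>M. \<forall>j\<in>M. i \<noteq> j \<longrightarrow> (Q {i, j} i j = 0 \<longrightarrow> 0 < Q {i, j} j i) \<and>
            Q {i, j} i j * Q M j i = Q {i, j} j i * Q M i j"
      using Qpos by (simp add: Qoff upos)
    show "(\<forall>i\<in>M. \<forall>j\<in>M. 0 \<le> Q M i j) \<and>
        (\<forall>i\<in>M. 0 \<le> nu M i) \<and> (\<Sum>i\<in>M. nu M i) = 1 \<and>
        (\<forall>i\<in>M. Q M i i = 1 - (\<Sum>k\<in>M - {i}. Q M i k) \<and> 0 < Q M i i) \<and>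
        (\<forall>i\<in>M. \<forall>j\<in>M. i \<noteq> j \<longrightarrow> (Q {i, j} i j = 0 \<longrightarrow> 0 < Q {i, j} j i) \<and>
            Q {i, j} i j * Q M j i = Q {i, j} j i * Q M i j)"
      by (intro conjI n1 n2 n3 n4 n5)
  qed
  have r1: "rationalizes Q nu p" unfolding rationalizes_def using msc rhoeq by auto
  have r2: "\<forall>M. menu M \<longrightarrow> fully_comparable M (Q M) \<and> reversible M (nu M) (Q M)"
  proof (intro allI impI conjI)
    fix M :: "'a set" assume M: "menu M"
    show "fully_comparable M (Q M)" unfolding fully_comparable_def using Qpos by auto
    show "reversible M (nu M) (Q M)" unfolding reversible_def
      using rhoeq[OF M] db[OF M] by (auto simp: mult_ac)
  qed
  have r3: "\<forall>M. menu M \<longrightarrow> (\<forall>i\<in>M. \<forall>j\<in>M. i \<noteq> j \<longrightarrow>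
                   Q M i j > 0 \<and> Q M i j / Q M j i = u j / u i)"
    using Qpos upos by (auto simp: Qoff)
  have r4: "\<forall>x. u x > 0" using upos by blast
  show ?thesis
    by (intro exI[of _ Q] exI[of _ nu] conjI r1 r2 exI[of _ u] r4 r3)
qed

lemma MSC_M:
  assumes "MSC Q nu" "menu M"
  shows "(\<forall>i\<in>M. \<forall>j\<in>M. Q M i j \<ge> 0) \<and>
        (\<forall>i\<in>M. nu M i \<ge> 0) \<and> (\<Sum>i\<in>M. nu M i) = 1 \<and>
        (\<forall>i\<in>M. Q M i i = 1 - (\<Sum>k\<in>M - {i}. Q M i k) \<and> Q M i i > 0) \<and>
        (\<forall>i\<in>M. \<forall>j\<in>M. i \<noteq> j \<longrightarrow>
            (Q {i, j} i j = 0 \<longrightarrow> Q {i, j} j i > 0) \<and>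
            Q {i, j} i j * Q M j i = Q {i, j} j i * Q M i j)"
  using assms(1) unfolding MSC_def by (rule mp[OF spec[of _ M]]) (rule assms(2))

lemma MSC_A3:
  assumes "MSC Q nu" "menu M" "i \<in> M" "j \<in> M" "i \<noteq> j"
  shows "Q {i, j} i j * Q M j i = Q {i, j} j i * Q M i j"
proof -
  have "\<forall>i\<in>M. \<forall>j\<in>M. i \<noteq> j \<longrightarrow>
            (Q {i, j} i j = 0 \<longrightarrow> Q {i, j} j i > 0) \<and>
            Q {i, j} i j * Q M j i = Q {i, j} j i * Q M i j"
    using MSC_M[OF assms(1,2)] by (elim conjE)
  then show ?thesis using assms(3-5) by blast
qed

lemma MSC_nusum:
  assumes "MSC Q nu" "menu M"
  shows "(\<Sum>i\<in>M. nu M i) = 1"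
  using MSC_M[OF assms] by (elim conjE)

lemma MSC_diag:
  assumes "MSC Q nu" "menu M" "i \<in> M"
  shows "Q M i i = 1 - (\<Sum>k\<in>M - {i}. Q M i k)" "Q M i i > 0"
proof -
  have "\<forall>i\<in>M. Q M i i = 1 - (\<Sum>k\<in>M - {i}. Q M i k) \<and> Q M i i > 0"
    using MSC_M[OF assms(1,2)] by (elim conjE)
  then show "Q M i i = 1 - (\<Sum>k\<in>M - {i}. Q M i k)" "Q M i i > 0" using assms(3) by auto
qed

lemma i_to_ii:
  fixes p :: "'a::finite \<Rightarrow> 'a set \<Rightarrow> real"
  assumes sc: "stoch_choice p" and rat: "rationalizes Q nu p"
    and H: "\<forall>M. menu M \<longrightarrow> fully_comparable M (Q M) \<and> reversible M (nu M) (Q M)"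
  shows "positive_sc p \<and> iia p"
proof -
  have msc: "MSC Q nu" using rat unfolding rationalizes_def by blast
  have pr: "p i M = rho M (nu M) (Q M) i" if "menu M" "i \<in> M" for M i
    using rat that unfolding rationalizes_def by blast
  have rev: "Q M j i * p j M = p i M * Q M i j" if M: "menu M" and "i \<in> M" "j \<in> M" for M i j
    using H M that pr[OF M] unfolding reversible_def by auto
  have fc: "Q M i j > 0" if M: "menu M" and "i \<in> M" "j \<in> M" "i \<noteq> j" for M i j
    using H M that unfolding fully_comparable_def by auto
  have posM: "p i M > 0" if M: "menu M" and i: "i \<in> M" for M i
  proof -
    have "\<exists>k\<in>M. p k M > 0"
    proof (rule ccontr)
      assume "\<not> ?thesis"
      then have "(\<Sum>k\<in>M. p k M) \<le> 0" by (intro sum_nonpos) auto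
      then show False using sc_facts[OF sc M] by simp
    qed
    then obtain k where k: "k \<in> M" "p k M > 0" by blast
    show ?thesis
    proof (cases "i = k")
      case True then show ?thesis using k by simp
    next
      case False
      have e: "Q M i k * p i M = p k M * Q M k i" using rev[OF M k(1) i] .
      have "p k M * Q M k i > 0" using k fc[OF M k(1) i] False by simp
      then have "0 < Q M i k * p i M" using e by simp
      moreover have "Q M i k > 0" using fc[OF M i k(1) False] .
      ultimately show ?thesis by (simp add: zero_less_mult_iff)
    qed
  qed
  have "iia p"
    unfolding iia_def
  proof (intro allI impI ballI)
    fix M :: "'a set" and i j :: 'a assume M: "menu M" and i: "i \<in> M" and j: "j \<in> M"
    show "p i {i, j} * p j M = p j {i, j} * p i M"
    proof (cases "i = j")
      case True then show ?thesis by simp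
    next
      case False
      have mij: "menu {i, j}" by (simp add: menu_def)
      define a where "a = Q {i, j} i j"
      define b where "b = Q {i, j} j i"
      define c where "c = Q M i j"
      define d where "d = Q M j i"
      have a: "a > 0" unfolding a_def using fc[OF mij _ _ False] by simp
      have d: "d > 0" unfolding d_def using fc[OF M j i] False by simp
      have r1: "d * p j M = p i M * c" unfolding c_def d_def using rev[OF M i j] .
      have r2: "b * p j {i, j} = p i {i, j} * a" unfolding a_def b_def using rev[OF mij, of i j] by simp
      have r3: "a * d = b * c" unfolding a_def b_def c_def d_def
        by (rule MSC_A3[OF msc M i j False])
      have "(a * d) * (p i {i, j} * p j M) = a * p i {i, j} * (d * p j M)" by (simp add: mult_ac)
      also have "\<dots> = c * p i M * (p i {i, j} * a)" using r1 by (simp add: mult_ac)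
      also have "\<dots> = c * p i M * (b * p j {i, j})" using r2 by simp
      also have "\<dots> = (b * c) * (p j {i, j} * p i M)" by (simp add: mult_ac)
      also have "\<dots> = (a * d) * (p j {i, j} * p i M)" using r3 by simp
      finally show ?thesis using a d by simp
    qed
  qed
  moreover have "positive_sc p" unfolding positive_sc_def using posM by blast
  ultimately show ?thesis by blast
qed

lemma iii_to_ii:
  fixes p :: "'a::finite \<Rightarrow> 'a set \<Rightarrow> real"
  assumes sc: "stoch_choice p" and rat: "rationalizes Q nu p"
    and upos: "\<forall>x. u x > 0"
    and H: "\<forall>M. menu M \<longrightarrow> (\<forall>i\<in>M. \<forall>j\<in>M. i \<noteq> j \<longrightarrow>
                   Q M i j > 0 \<and> Q M i j / Q M j i = u j / u i)"
  shows "positive_sc p \<and> iia p"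
proof -
  have msc: "MSC Q nu" using rat unfolding rationalizes_def by blast
  have peq: "p i M = u i / (\<Sum>k\<in>M. u k)" if M: "menu M" and i: "i \<in> M" for M i
  proof -
    have ne: "M \<noteq> {}" using M unfolding menu_def .
    define U where "U = (\<Sum>k\<in>M. u k)"
    have U: "U > 0" unfolding U_def using ne upos by (intro sum_pos) auto
    have Qpos: "Q M a b > 0" if "a \<in> M" "b \<in> M" for a b
    proof (cases "a = b")
      case True then show ?thesis using MSC_diag[OF msc M that(1)] by simp
    next
      case False then show ?thesis using H M that by blast
    qed
    have Qrow: "(\<Sum>b\<in>M. Q M a b) = 1" if "a \<in> M" for a
      using MSC_diag[OF msc M that] that by (simp add: sum.remove)
    have db: "u a / U * Q M a b = u b / U * Q M b a" if "a \<in> M" "b \<in> M" for a b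
    proof (cases "a = b")
      case True then show ?thesis by simp
    next
      case False
      have q: "Q M b a > 0" using Qpos that by simp
      have "Q M a b / Q M b a = u b / u a" using H M that False by blast
      moreover have ua: "u a > 0" using upos by blast
      ultimately have "Q M a b = u b / u a * Q M b a" using q by (simp add: field_simps)
      then have "Q M a b * u a = u b * Q M b a" using ua by (simp add: field_simps)
      then show ?thesis by (simp add: field_simps mult_ac)
    qed
    have "rho M (nu M) (Q M) i = u i / U"
    proof (rule ergodic[OF menu_finite ne])
      show "\<And>a b. a \<in> M \<Longrightarrow> b \<in> M \<Longrightarrow> Q M a b > 0" by (rule Qpos)
      show "\<And>a. a \<in> M \<Longrightarrow> (\<Sum>b\<in>M. Q M a b) = 1" by (rule Qrow)
      show "\<And>a. a \<in> M \<Longrightarrow> u a / U > 0" using upos U by simp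
      show "(\<Sum>a\<in>M. u a / U) = 1" using U unfolding U_def by (simp add: sum_divide_distrib[symmetric])
      show "\<And>a b. a \<in> M \<Longrightarrow> b \<in> M \<Longrightarrow> u a / U * Q M a b = u b / U * Q M b a" by (rule db)
      show "(\<Sum>a\<in>M. nu M a) = 1" by (rule MSC_nusum[OF msc M])
      show "i \<in> M" by (rule i)
    qed
    then show ?thesis using rat M i unfolding rationalizes_def U_def by auto
  qed
  have "positive_sc p"
    unfolding positive_sc_def
  proof (intro allI impI ballI)
    fix M :: "'a set" and i :: 'a assume M: "menu M" and i: "i \<in> M"
    have "(\<Sum>k\<in>M. u k) > 0" using M upos unfolding menu_def by (intro sum_pos) auto
    then show "p i M > 0" using peq[OF M i] upos by simp
  qed
  moreover have "iia p"
    unfolding iia_def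
  proof (intro allI impI ballI)
    fix M :: "'a set" and i j :: 'a assume M: "menu M" and i: "i \<in> M" and j: "j \<in> M"
    have mij: "menu {i, j}" by (simp add: menu_def)
    show "p i {i, j} * p j M = p j {i, j} * p i M"
      using peq[OF M i] peq[OF M j] peq[OF mij, of i] peq[OF mij, of j] by simp
  qed
  ultimately show ?thesis by blast
qed

theorem theorem3:
  fixes p :: "'a::finite \<Rightarrow> 'a set \<Rightarrow> real"
  assumes "stoch_choice p"
  shows "((\<exists>Q nu. rationalizes Q nu p \<and>
             (\<forall>M. menu M \<longrightarrow> fully_comparable M (Q M) \<and> reversible M (nu M) (Q M)))
          \<longleftrightarrow> (positive_sc p \<and> iia p))
       \<and> ((positive_sc p \<and> iia p) \<longleftrightarrow>
          (\<exists>Q nu. rationalizes Q nu p \<and>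
             (\<exists>u :: 'a \<Rightarrow> real. (\<forall>x. u x > 0) \<and>
               (\<forall>M. menu M \<longrightarrow> (\<forall>i\<in>M. \<forall>j\<in>M. i \<noteq> j \<longrightarrow>
                   Q M i j > 0 \<and> Q M i j / Q M j i = u j / u i)))))"
proof -
  have A: "(\<exists>Q nu. rationalizes Q nu p \<and>
             (\<forall>M. menu M \<longrightarrow> fully_comparable M (Q M) \<and> reversible M (nu M) (Q M)))
          \<Longrightarrow> (positive_sc p \<and> iia p)"
  proof -
    assume "\<exists>Q nu. rationalizes Q nu p \<and>
             (\<forall>M. menu M \<longrightarrow> fully_comparable M (Q M) \<and> reversible M (nu M) (Q M))"
    then obtain Q nu where "rationalizes Q nu p"
      "\<forall>M. menu M \<longrightarrow> fully_comparable M (Q M) \<and> reversible M (nu M) (Q M)" by blast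
    then show ?thesis by (rule i_to_ii[OF assms])
  qed
  have C: "(\<exists>Q nu. rationalizes Q nu p \<and>
             (\<exists>u :: 'a \<Rightarrow> real. (\<forall>x. u x > 0) \<and>
               (\<forall>M. menu M \<longrightarrow> (\<forall>i\<in>M. \<forall>j\<in>M. i \<noteq> j \<longrightarrow>
                   Q M i j > 0 \<and> Q M i j / Q M j i = u j / u i))))
          \<Longrightarrow> (positive_sc p \<and> iia p)"
  proof -
    assume "\<exists>Q nu. rationalizes Q nu p \<and>
             (\<exists>u :: 'a \<Rightarrow> real. (\<forall>x. u x > 0) \<and>
               (\<forall>M. menu M \<longrightarrow> (\<forall>i\<in>M. \<forall>j\<in>M. i \<noteq> j \<longrightarrow>
                   Q M i j > 0 \<and> Q M i j / Q M j i = u j / u i)))"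
    then obtain Q nu u where "rationalizes Q nu p" "\<forall>x. u x > 0"
      "\<forall>M. menu M \<longrightarrow> (\<forall>i\<in>M. \<forall>j\<in>M. i \<noteq> j \<longrightarrow>
                   Q M i j > 0 \<and> Q M i j / Q M j i = u j / u i)" by blast
    then show ?thesis by (rule iii_to_ii[OF assms])
  qed
  have B: "positive_sc p \<and> iia p \<Longrightarrow> \<exists>Q nu. rationalizes Q nu p \<and>
     (\<forall>M. menu M \<longrightarrow> fully_comparable M (Q M) \<and> reversible M (nu M) (Q M)) \<and>
     (\<exists>u :: 'a \<Rightarrow> real. (\<forall>x. u x > 0) \<and>
               (\<forall>M. menu M \<longrightarrow> (\<forall>i\<in>M. \<forall>j\<in>M. i \<noteq> j \<longrightarrow>
                   Q M i j > 0 \<and> Q M i j / Q M j i = u j / u i)))"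
    using construct[OF assms] by blast
  show ?thesis
  proof (rule conjI; rule iffI)
    show "positive_sc p \<and> iia p" if "\<exists>Q nu. rationalizes Q nu p \<and>
             (\<forall>M. menu M \<longrightarrow> fully_comparable M (Q M) \<and> reversible M (nu M) (Q M))"
      using A that .
    show "positive_sc p \<and> iia p" if "\<exists>Q nu. rationalizes Q nu p \<and>
             (\<exists>u :: 'a \<Rightarrow> real. (\<forall>x. u x > 0) \<and>
               (\<forall>M. menu M \<longrightarrow> (\<forall>i\<in>M. \<forall>j\<in>M. i \<noteq> j \<longrightarrow>
                   Q M i j > 0 \<and> Q M i j / Q M j i = u j / u i)))"
      using C that .
  next
    assume h: "positive_sc p \<and> iia p"
    from B[OF h] obtain Q nu where q: "rationalizes Q nu p \<and>
     (\<forall>M. menu M \<longrightarrow> fully_comparable M (Q M) \<and> reversible M (nu M) (Q M)) \<and>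
     (\<exists>u :: 'a \<Rightarrow> real. (\<forall>x. u x > 0) \<and>
               (\<forall>M. menu M \<longrightarrow> (\<forall>i\<in>M. \<forall>j\<in>M. i \<noteq> j \<longrightarrow>
                   Q M i j > 0 \<and> Q M i j / Q M j i = u j / u i)))" by blast
    show "\<exists>Q nu. rationalizes Q nu p \<and>
             (\<forall>M. menu M \<longrightarrow> fully_comparable M (Q M) \<and> reversible M (nu M) (Q M))"
      using q by blast
  next
    assume h: "positive_sc p \<and> iia p"
    from B[OF h] obtain Q nu where q: "rationalizes Q nu p \<and>
     (\<forall>M. menu M \<longrightarrow> fully_comparable M (Q M) \<and> reversible M (nu M) (Q M)) \<and>
     (\<exists>u :: 'a \<Rightarrow> real. (\<forall>x. u x > 0) \<and>
               (\<forall>M. menu M \<longrightarrow> (\<forall>i\<in>M. \<forall>j\<in>M. i \<noteq> j \<longrightarrow>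
                   Q M i j > 0 \<and> Q M i j / Q M j i = u j / u i)))" by blast
    show "\<exists>Q nu. rationalizes Q nu p \<and>
             (\<exists>u :: 'a \<Rightarrow> real. (\<forall>x. u x > 0) \<and>
               (\<forall>M. menu M \<longrightarrow> (\<forall>i\<in>M. \<forall>j\<in>M. i \<noteq> j \<longrightarrow>
                   Q M i j > 0 \<and> Q M i j / Q M j i = u j / u i)))"
      using q by blast
  qed
qed

end
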